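(* Let $d\ge2$, $1\le m<d$, $\delta\in(0,1)$, let $f=(f_1,\dots,f_L):\mathbb{R}^d\to\mathbb{R}^L$ be a classifier, $\boldsymbol{x}_0\in\mathbb{R}^d$ with label $\hat k$ and $\|\boldsymbol{r}^*\|_2<\infty$, let $\mathcal S$ be a random $m$-dimensional subspace, and let $0\le l\le u$, $t\ge0$. Let $p\in\arg\min_{i\neq\hat k}\|\boldsymbol{r}^i\|_2$ and define the (deterministic) set $$A=\Big\{k\neq\hat k:\ \|\boldsymbol{r}^k\|_2\ge1.45\sqrt{\zeta_2(m,\delta)}\sqrt{\tfrac dm}\,\|\boldsymbol{r}^*\|_2\Big\}.$$ Assume that for every $k\ne\hat k$ with $k\notin A$, $\mathbb{P}\big(l\le\|\boldsymbol{r}^k_{\mathcal S}\|_2/\|\boldsymbol{r}^k\|_2\le u\big)\ge1-\delta$, and that $\mathbb{P}\big(\|\boldsymbol{r}^p_{\mathcal S}\|_2\ge1.45\sqrt{\zeta_2(m,\delta)}\sqrt{\tfrac dm}\,\|\boldsymbol{r}^*\|_2\big)\le t$. Then $$\mathbb{P}\Big(l\le\frac{\|\boldsymbol{r}^*_{\mathcal S}\|_2}{\|\boldsymbol{r}^*\|_2}\le u\Big)\ge1-(L+1)\delta-t.$$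
   Context: For an $L$-class classifier $f=(f_1,\dots,f_L):\mathbb{R}^d\to\mathbb{R}^L$ and a point $\boldsymbol{x}_0$ with estimated label $\hat k=\arg\max_k f_k(\boldsymbol{x}_0)$, and for a linear subspace $\mathcal{S}\subseteq\mathbb{R}^d$ and $k\neq\hat k$, define $\|\boldsymbol{r}^k_{\mathcal S}\|_2=\inf\{\|\boldsymbol{r}\|_2:\boldsymbol{r}\in\mathcal{S},\ f_k(\boldsymbol{x}_0+\boldsymbol{r})\ge f_{\hat k}(\boldsymbol{x}_0+\boldsymbol{r})\}$ (with $\inf\emptyset=+\infty$), $\|\boldsymbol{r}^k\|_2:=\|\boldsymbol{r}^k_{\mathbb{R}^d}\|_2$, $\|\boldsymbol{r}^*_{\mathcal S}\|_2=\min_{k\neq\hat k}\|\boldsymbol{r}^k_{\mathcal S}\|_2$ and $\|\boldsymbol{r}^*\|_2=\min_{k\neq\hat k}\|\boldsymbol{r}^k\|_2$. A random $m$-dimensional subspace of $\mathbb{R}^d$ is the span of $m$ independent vectors drawn uniformly from the unit sphere $\mathbb{S}^{d-1}$. For $m\ge1$ and $\delta\in(0,1)$, $\zeta_2(m,\delta)=\Big(\max\big(\tfrac1e\delta^{2/m},\,1-\sqrt{2(1-\delta^{2/m})}\big)\Big)^{-1}$. *)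

theory Defs
  imports "HOL-Probability.Probability"
begin

text \<open>Classifier f : R^d -> R^L is modelled as f :: 'a => nat => real, with classes 1..L.\<close>

definition classes :: "nat \<Rightarrow> nat set" where
  "classes L = {1..L}"

text \<open>Minimal adversarial perturbation norm towards class k, restricted to a subspace S
  (infimum of the empty set is +infinity in ereal).\<close>
definition rS :: "('a::real_normed_vector \<Rightarrow> nat \<Rightarrow> real) \<Rightarrow> 'a \<Rightarrow> nat \<Rightarrow> 'a set \<Rightarrow> nat \<Rightarrow> ereal" where
  "rS f x0 khat S k = Inf {ereal (norm r) | r. r \<in> S \<and> f (x0 + r) k \<ge> f (x0 + r) khat}"

definition r_full :: "('a::real_normed_vector \<Rightarrow> nat \<Rightarrow> real) \<Rightarrow> 'a \<Rightarrow> nat \<Rightarrow> nat \<Rightarrow> ereal" where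
  "r_full f x0 khat k = rS f x0 khat UNIV k"

definition rS_star :: "('a::real_normed_vector \<Rightarrow> nat \<Rightarrow> real) \<Rightarrow> nat \<Rightarrow> 'a \<Rightarrow> nat \<Rightarrow> 'a set \<Rightarrow> ereal" where
  "rS_star f L x0 khat S = (INF k \<in> classes L - {khat}. rS f x0 khat S k)"

definition r_star :: "('a::real_normed_vector \<Rightarrow> nat \<Rightarrow> real) \<Rightarrow> nat \<Rightarrow> 'a \<Rightarrow> nat \<Rightarrow> ereal" where
  "r_star f L x0 khat = rS_star f L x0 khat UNIV"

definition zeta2 :: "nat \<Rightarrow> real \<Rightarrow> real" where
  "zeta2 m \<delta> = 1 / max ((1 / exp 1) * \<delta> powr (2 / real m))
                          (1 - sqrt (2 * (1 - \<delta> powr (2 / real m))))"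

text \<open>Uniform (normalized surface) measure on the unit sphere S^{d-1}, obtained as the
  radial projection of the uniform distribution on the unit ball.\<close>
definition uniform_sphere :: "'a::euclidean_space measure" where
  "uniform_sphere = distr (uniform_measure lborel (ball 0 1)) borel (\<lambda>x. x /\<^sub>R norm x)"

definition sphere_vectors :: "nat \<Rightarrow> (nat \<Rightarrow> 'a::euclidean_space) measure" where
  "sphere_vectors m = PiM {..<m} (\<lambda>_. uniform_sphere)"

definition rand_subspace :: "nat \<Rightarrow> (nat \<Rightarrow> 'a::real_vector) \<Rightarrow> 'a set" where
  "rand_subspace m \<omega> = span (\<omega> ` {..<m})"

end

theory Submission
  imports Defs
begin

lemma ps_sphere: "prob_space (uniform_sphere :: 'a::euclidean_space measure)"
  unfolding uniform_sphere_def
proof (rule prob_space.prob_space_distr)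
  have "measure lborel (ball (0::'a) 1) > 0" using content_ball_pos[of 1 "0::'a"] by simp
  hence "emeasure lborel (ball (0::'a) 1) \<noteq> 0"
    by (metis measure_def enn2real_0 less_irrefl)
  thus "prob_space (uniform_measure lborel (ball (0::'a) 1))"
    using emeasure_lborel_ball_finite[of "0::'a" 1]
    by (intro prob_space_uniform_measure) auto
  show "(\<lambda>x::'a. x /\<^sub>R norm x) \<in> uniform_measure lborel (ball 0 1) \<rightarrow>\<^sub>M borel"
    by (simp add: measurable_cong_sets[OF sets_uniform_measure refl]) measurable
qed
lemma ps_P: "prob_space (sphere_vectors m :: (nat \<Rightarrow> 'a::euclidean_space) measure)"
  unfolding sphere_vectors_def by (intro prob_space_PiM ps_sphere)

lemma div_le: fixes x :: ereal assumes "0 < \<rho>" "0 \<le> x"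
  shows "(ereal l \<le> x / ereal \<rho>) \<longleftrightarrow> ereal (l*\<rho>) \<le> x"
    and "(x / ereal \<rho> \<le> ereal u) \<longleftrightarrow> x \<le> ereal (u*\<rho>)"
  using assms by (cases x; auto simp: field_simps)+

lemma rS_nonneg: "0 \<le> rS f x0 khat S k"
  unfolding rS_def by (rule Inf_greatest) auto
lemma rS_ge: "r_full f x0 khat k \<le> rS f x0 khat S k"
  unfolding rS_def r_full_def by (rule Inf_superset_mono) auto


theorem lemma5:
  fixes f :: "'a::euclidean_space \<Rightarrow> nat \<Rightarrow> real"
    and L m :: nat and x0 :: 'a and khat p :: nat and \<delta> l u t :: real
  defines "P \<equiv> (sphere_vectors m :: (nat \<Rightarrow> 'a) measure)"
    and "c \<equiv> ereal (1.45 * sqrt (zeta2 m \<delta>) * sqrt (real DIM('a) / real m)) * r_star f L x0 khat"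
    and "A \<equiv> {k \<in> classes L - {khat}. r_full f x0 khat k \<ge>
         ereal (1.45 * sqrt (zeta2 m \<delta>) * sqrt (real DIM('a) / real m)) * r_star f L x0 khat}"
  assumes "DIM('a) \<ge> 2" and "1 \<le> m" and "m < DIM('a)"
    and "0 < \<delta>" and "\<delta> < 1"
    and khat: "khat \<in> classes L" "\<forall>k \<in> classes L. f x0 k \<le> f x0 khat"
    and fin: "r_star f L x0 khat < \<infinity>"
    and "0 \<le> l" and "l \<le> u" and "0 \<le> t"
    and p: "p \<in> classes L - {khat}" "r_full f x0 khat p = r_star f L x0 khat"
    and hk: "\<forall>k \<in> classes L - {khat}. k \<notin> A \<longrightarrow>
              measure P {\<omega> \<in> space P.
                 ereal l \<le> rS f x0 khat (rand_subspace m \<omega>) k / r_full f x0 khat k \<and>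
                 rS f x0 khat (rand_subspace m \<omega>) k / r_full f x0 khat k \<le> ereal u} \<ge> 1 - \<delta>"
    and hp_meas: "{\<omega> \<in> space P. rS f x0 khat (rand_subspace m \<omega>) p \<ge> c} \<in> sets P"
    and hp: "measure P {\<omega> \<in> space P. rS f x0 khat (rand_subspace m \<omega>) p \<ge> c} \<le> t"
    and concl_meas: "{\<omega> \<in> space P.
                 ereal l \<le> rS_star f L x0 khat (rand_subspace m \<omega>) / r_star f L x0 khat \<and>
                 rS_star f L x0 khat (rand_subspace m \<omega>) / r_star f L x0 khat \<le> ereal u} \<in> sets P"
  shows "measure P {\<omega> \<in> space P.
                 ereal l \<le> rS_star f L x0 khat (rand_subspace m \<omega>) / r_star f L x0 khat \<and>
                 rS_star f L x0 khat (rand_subspace m \<omega>) / r_star f L x0 khat \<le> ereal u}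
           \<ge> 1 - (real L + 1) * \<delta> - t"

proof -
  interpret prob_space P unfolding P_def by (rule ps_P)
  define K where "K = classes L - {khat}"
  define R where "R = r_star f L x0 khat"
  define rs where "rs = (\<lambda>\<omega> k. rS f x0 khat (rand_subspace m \<omega>) k)"
  define rss where "rss = (\<lambda>\<omega>. rS_star f L x0 khat (rand_subspace m \<omega>))"
  define a where "a = 1.45 * sqrt (zeta2 m \<delta>) * sqrt (real DIM('a) / real m)"
  define E where "E = (\<lambda>k. {\<omega> \<in> space P. ereal l \<le> rs \<omega> k / r_full f x0 khat k \<and>
                 rs \<omega> k / r_full f x0 khat k \<le> ereal u})"
  define B where "B = {\<omega> \<in> space P. rs \<omega> p \<ge> c}"
  define C where "C = {\<omega> \<in> space P. ereal l \<le> rss \<omega> / R \<and> rss \<omega> / R \<le> ereal u}"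
  have finK: "finite K" unfolding K_def classes_def by simp
  have pK: "p \<in> K" using p unfolding K_def by simp
  have Csets: "C \<in> events" using concl_meas unfolding C_def rss_def R_def P_def by simp
  have Bsets: "B \<in> events" using hp_meas unfolding B_def rs_def by simp
  have probB: "prob B \<le> t" using hp unfolding B_def rs_def by simp
  have Rdef: "R = (INF k\<in>K. r_full f x0 khat k)"
    unfolding R_def K_def r_star_def rS_star_def r_full_def by simp
  have R0: "0 \<le> R" unfolding Rdef r_full_def by (rule INF_greatest) (rule rS_nonneg)
  have RK: "R \<le> r_full f x0 khat k" if "k \<in> K" for k unfolding Rdef using that by (rule INF_lower)
  have cdef: "c = ereal a * R" unfolding c_def a_def R_def by simp
  show ?thesis
  proof (cases "R = 0")
    case True
    have "B = space P" unfolding B_def cdef True by (auto simp: rs_def rS_nonneg)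
    hence "1 \<le> t" using probB prob_space by simp
    moreover have "0 \<le> (real L + 1) * \<delta>" using \<open>0 < \<delta>\<close> by simp
    ultimately show ?thesis using measure_nonneg[of P] by (smt (verit) measure_nonneg)
  next
    case False
    with R0 fin obtain \<rho> where R\<rho>: "R = ereal \<rho>" and \<rho>0: "0 < \<rho>"
      unfolding R_def[symmetric] by (cases R) auto
    have M1: "max ((1 / exp 1) * \<delta> powr (2 / real m)) (1 - sqrt (2 * (1 - \<delta> powr (2 / real m)))) \<le> 1"
    proof -
      have d1: "\<delta> powr (2 / real m) \<le> 1" using \<open>0 < \<delta>\<close> \<open>\<delta> < 1\<close> by (intro powr_le1) auto
      moreover have "1 / exp 1 \<le> (1::real)" by simp
      moreover have "0 \<le> \<delta> powr (2 / real m)" by simp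
      ultimately have "(1 / exp 1) * \<delta> powr (2 / real m) \<le> 1"
        by (metis mult_le_one divide_nonneg_nonneg exp_ge_zero zero_le_one)
      thus ?thesis using d1 by simp
    qed
    have M0: "0 < max ((1 / exp 1) * \<delta> powr (2 / real m)) (1 - sqrt (2 * (1 - \<delta> powr (2 / real m))))"
    proof -
      have "0 < (1 / exp 1) * \<delta> powr (2 / real m)" using \<open>0 < \<delta>\<close> by simp
      thus ?thesis by (rule less_le_trans[OF _ max.cobounded1])
    qed
    have z1: "1 \<le> zeta2 m \<delta>" unfolding zeta2_def by (subst le_divide_eq_1_pos[OF M0]) (rule M1)
    have "1 < real DIM('a) / real m" using \<open>1 \<le> m\<close> \<open>m < DIM('a)\<close> by (simp add: less_divide_eq)
    hence s1: "1 < sqrt (real DIM('a) / real m)" by simp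
    have "1 \<le> sqrt (zeta2 m \<delta>)" using z1 by simp
    hence "1 * sqrt (real DIM('a) / real m) \<le> sqrt (zeta2 m \<delta>) * sqrt (real DIM('a) / real m)"
      using s1 by (intro mult_right_mono) auto
    moreover have "a = 29/20 * (sqrt (zeta2 m \<delta>) * sqrt (real DIM('a) / real m))"
      unfolding a_def by simp
    ultimately have a1: "1 < a" using s1 by linarith
    have cR: "c = ereal (a * \<rho>)" unfolding cdef R\<rho> by simp
    have Adef: "A = {k \<in> K. r_full f x0 khat k \<ge> c}" unfolding A_def K_def c_def by simp
    have Ek: "E k \<in> events \<and> prob (space P - E k) \<le> \<delta>" if "k \<in> K - A" for k
    proof -
      have m: "prob (E k) \<ge> 1 - \<delta>" using hk that unfolding E_def rs_def K_def P_def by auto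
      hence "E k \<in> events" using \<open>\<delta> < 1\<close> measure_notin_sets[of "E k" P] by force
      thus ?thesis using m prob_compl by simp
    qed
    have key: "\<omega> \<in> C" if w: "\<omega> \<in> space P" "\<omega> \<notin> B" "\<forall>k\<in>K - A. \<omega> \<in> E k" for \<omega>
    proof -
      have rsp: "rs \<omega> p < c" using w unfolding B_def by auto
      have fin_k: "\<exists>\<rho>k. r_full f x0 khat k = ereal \<rho>k \<and> \<rho> \<le> \<rho>k" if "k \<in> K - A" for k
      proof -
        have "ereal \<rho> \<le> r_full f x0 khat k" using RK that R\<rho> by auto
        moreover have "r_full f x0 khat k < c" using that unfolding Adef by auto
        ultimately show ?thesis unfolding cR by (cases "r_full f x0 khat k") auto
      qed
      have pA: "p \<in> K - A" using pK p(2) a1 \<rho>0 unfolding Adef cR R_def[symmetric] R\<rho> by simp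
      have "\<omega> \<in> E p" using w(3) pA by blast
      hence "rs \<omega> p / r_full f x0 khat p \<le> ereal u" unfolding E_def by blast
      moreover have "r_full f x0 khat p = ereal \<rho>" using p(2) unfolding R_def[symmetric] R\<rho> .
      ultimately have "rs \<omega> p / ereal \<rho> \<le> ereal u" by simp
      hence up: "rs \<omega> p \<le> ereal (u * \<rho>)" using div_le(2)[OF \<rho>0 rS_nonneg] unfolding rs_def by blast
      have rssdef: "rss \<omega> = Inf (rs \<omega> ` K)" unfolding rss_def rs_def rS_star_def K_def by simp
      have rssp: "rss \<omega> \<le> rs \<omega> p" unfolding rssdef using pK by (simp add: INF_lower)
      have rss0: "0 \<le> rss \<omega>" unfolding rssdef by (rule INF_greatest) (simp add: rs_def rS_nonneg)
      have "Inf (rs \<omega> ` K) \<in> rs \<omega> ` K" using finK pK Min_Inf[of "rs \<omega> ` K"] Min_in[of "rs \<omega> ` K"] by auto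
      then obtain j where j: "j \<in> K" "rss \<omega> = rs \<omega> j" unfolding rssdef by auto
      have jA: "j \<notin> A"
      proof
        assume "j \<in> A"
        hence "c \<le> rs \<omega> j" using rS_ge[of f x0 khat j] unfolding Adef rs_def by (auto intro: order_trans)
        thus False using rsp rssp j(2) by simp
      qed
      obtain \<rho>j where \<rho>j: "r_full f x0 khat j = ereal \<rho>j" "\<rho> \<le> \<rho>j" using fin_k j(1) jA by blast
      have "\<omega> \<in> E j" using w(3) j(1) jA by blast
      hence "ereal l \<le> rs \<omega> j / r_full f x0 khat j" unfolding E_def by blast
      hence "ereal l \<le> rs \<omega> j / ereal \<rho>j" using \<rho>j(1) by simp
      hence "ereal (l * \<rho>j) \<le> rs \<omega> j" using div_le(1)[of \<rho>j "rs \<omega> j" l] \<rho>0 \<rho>j(2) unfolding rs_def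
        by (simp add: rS_nonneg)
      moreover have "l * \<rho> \<le> l * \<rho>j" using \<rho>j(2) \<open>0 \<le> l\<close> by (simp add: mult_left_mono)
      ultimately have "ereal (l * \<rho>) \<le> rss \<omega>" using j(2) by (metis ereal_less_eq(3) order_trans)
      hence "ereal l \<le> rss \<omega> / R" unfolding R\<rho> using div_le(1)[OF \<rho>0 rss0] by blast
      moreover have "rss \<omega> / R \<le> ereal u" unfolding R\<rho> using div_le(2)[OF \<rho>0 rss0] rssp up by auto
      ultimately show ?thesis using w(1) unfolding C_def by simp
    qed
    have sub: "space P - C \<subseteq> (\<Union>k\<in>K - A. space P - E k) \<union> B" using key by blast
    have finKA: "finite (K - A)" using finK by simp
    have U: "(\<Union>k\<in>K - A. space P - E k) \<in> events"
    proof (rule sets.finite_UN[OF finKA])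
      fix k assume "k \<in> K - A"
      thus "space P - E k \<in> events" using Ek by blast
    qed
    have "prob (space P - C) \<le> prob ((\<Union>k\<in>K - A. space P - E k) \<union> B)"
      using U Bsets by (intro finite_measure_mono[OF sub]) (rule sets.Un)
    also have "\<dots> \<le> prob (\<Union>k\<in>K - A. space P - E k) + prob B"
      using U Bsets by (intro measure_subadditive) (auto simp: emeasure_eq_measure)
    also have "prob (\<Union>k\<in>K - A. space P - E k) \<le> (\<Sum>k\<in>K - A. prob (space P - E k))"
      using Ek finKA by (intro finite_measure_subadditive_finite) auto
    also have "\<dots> \<le> (\<Sum>k\<in>K - A. \<delta>)" using Ek by (intro sum_mono) auto
    also have "\<dots> = real (card (K - A)) * \<delta>" by simp
    also have "real (card (K - A)) \<le> real L"
    proof -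
      have "card (K - A) \<le> card {1..L}" unfolding K_def classes_def by (intro card_mono) auto
      thus ?thesis by simp
    qed
    finally have "prob (space P - C) \<le> real L * \<delta> + t" using probB \<open>0 < \<delta>\<close>
      by (smt (verit) mult_right_mono)
    hence "prob C \<ge> 1 - real L * \<delta> - t" using prob_compl[OF Csets] by simp
    thus ?thesis using \<open>0 < \<delta>\<close> unfolding C_def rss_def R_def by (simp add: algebra_simps)
  qed
qed


end
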